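(* Let $Q_0$ be a probability measure on $\mathbb{R}^n$ supported on a bounded set, $\sigma>0$, $R>0$, $\epsilon\in(0,1)$, and let $\mathcal C=\{\hat\mu_1,\dots,\hat\mu_{k'}\}$ be a complete set of $R$-warm starts for $Q_0$ with Voronoi partition $V_1,\dots,V_{k'}$. Let $R'=3R+2\sqrt2\,\sigma\sqrt{\ln(k'/\epsilon)}$, $S_i=B_{R'}(\hat\mu_i)$, and assume $Q_0(S_i)>0$ for each $i$. Define $f_{\mathrm{loc},\sigma^2}(y)=f_{S_i,\sigma^2}(y)$ for $y\in V_i$. Then, with $P=Q_0*\mathcal N(0,\sigma^2I_n)$, $$\|f_{\sigma^2}-f_{\mathrm{loc},\sigma^2}\|_{L^2(P)}^2\le(32\sigma^2+6R'^2)\,\epsilon.$$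
   Context: $B_R(x_0)$ is the closed Euclidean ball. A finite set $\mathcal C\subset\mathbb{R}^n$ is a complete set of $R$-warm starts for $Q_0$ if $Q_0\big(\bigcup_{\hat\mu\in\mathcal C}B_R(\hat\mu)\big)=1$. The Voronoi partition of $\{\hat\mu_1,\dots,\hat\mu_{k'}\}$ is $V_j=\{x:\|x-\hat\mu_j\|=\min_{j'}\|x-\hat\mu_{j'}\|\}$ (ties, a null set, broken arbitrarily so that the $V_j$ partition $\mathbb{R}^n$). For a set $S$ with $Q_0(S)>0$, $Q_0|_S(A)=Q_0(A\cap S)/Q_0(S)$, and $f_{S,\sigma^2}(y)=\mathbb E[\mu\mid Y=y]$ where $\mu\sim Q_0|_S$, $Y=\mu+\sigma\xi$, $\xi\sim\mathcal N(0,I_n)$ independent; $f_{\sigma^2}=f_{\mathbb{R}^n,\sigma^2}$ is the same with $\mu\sim Q_0$. *)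

theory Defs
  imports "HOL-Probability.Probability"
begin

definition gauss_pdf :: "real \<Rightarrow> 'a::euclidean_space \<Rightarrow> real" where
  "gauss_pdf \<sigma> z = (2 * pi * \<sigma>\<^sup>2) powr (- real DIM('a) / 2) * exp (- (norm z)\<^sup>2 / (2 * \<sigma>\<^sup>2))"

definition gauss_measure :: "real \<Rightarrow> 'a::euclidean_space measure" where
  "gauss_measure \<sigma> = density lborel (\<lambda>z. ennreal (gauss_pdf \<sigma> z))"

definition cond_measure :: "'a measure \<Rightarrow> 'a set \<Rightarrow> 'a measure" where
  "cond_measure Q S = density Q (\<lambda>x. ennreal (indicator S x / measure Q S))"

text \<open>Posterior mean E[mu | Y = y] for mu ~ M, Y = mu + sigma xi (Bayes formula).\<close>
definition post_mean :: "'a::euclidean_space measure \<Rightarrow> real \<Rightarrow> 'a \<Rightarrow> 'a" where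
  "post_mean M \<sigma> y =
     (\<integral>\<mu>. gauss_pdf \<sigma> (y - \<mu>) *\<^sub>R \<mu> \<partial>M) /\<^sub>R (\<integral>\<mu>. gauss_pdf \<sigma> (y - \<mu>) \<partial>M)"

definition gauss_conv :: "'a::euclidean_space measure \<Rightarrow> real \<Rightarrow> 'a measure" where
  "gauss_conv Q \<sigma> = distr (Q \<Otimes>\<^sub>M gauss_measure \<sigma>) borel (\<lambda>(m, z). m + z)"

definition warm_starts :: "'a::euclidean_space measure \<Rightarrow> real \<Rightarrow> 'a set \<Rightarrow> bool" where
  "warm_starts Q R C \<longleftrightarrow> finite C \<and> emeasure Q (\<Union>c\<in>C. cball c R) = 1"

definition voronoi_partition :: "'a::euclidean_space set \<Rightarrow> ('a \<Rightarrow> 'a set) \<Rightarrow> bool" where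
  "voronoi_partition C V \<longleftrightarrow>
     (\<forall>c\<in>C. V c \<in> sets borel) \<and>
     (\<forall>c\<in>C. \<forall>x\<in>V c. \<forall>c'\<in>C. dist x c \<le> dist x c') \<and>
     (\<Union>c\<in>C. V c) = UNIV \<and>
     (\<forall>c\<in>C. \<forall>c'\<in>C. c \<noteq> c' \<longrightarrow> V c \<inter> V c' = {})"

end

theory Submission
  imports Defs
begin


lemma norm_sq_basis: "(norm (z::'a::euclidean_space))\<^sup>2 = (\<Sum>b\<in>Basis. (z \<bullet> b)\<^sup>2)"
  by (subst power2_norm_eq_inner, subst euclidean_inner) (simp add: power2_eq_square)

lemma powr_aux: assumes "(x::real) > 0" shows "x powr (- real n / 2) = (1 / sqrt x) ^ n"
proof -
  have "1 / sqrt x = x powr (-1/2)"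
    using assms by (simp add: powr_minus_divide powr_half_sqrt[symmetric])
  then have "(1 / sqrt x) ^ n = (x powr (-1/2)) powr real n"
    using assms by (simp add: powr_realpow)
  also have "\<dots> = x powr (- real n / 2)" by (simp add: powr_powr)
  finally show ?thesis by simp
qed

lemma gauss_pdf_prod:
  assumes "\<sigma> > 0"
  shows "gauss_pdf \<sigma> (z::'a::euclidean_space) = (\<Prod>b\<in>Basis. normal_density 0 \<sigma> (z \<bullet> b))"
proof -
  have p: "2 * pi * \<sigma>\<^sup>2 > 0" using assms by simp
  have "(2 * pi * \<sigma>\<^sup>2) powr (- real DIM('a) / 2) = (1 / sqrt (2 * pi * \<sigma>\<^sup>2)) ^ DIM('a)"
    using p by (rule powr_aux)
  moreover have "exp (- (norm z)\<^sup>2 / (2 * \<sigma>\<^sup>2)) = (\<Prod>b\<in>Basis. exp (- (z \<bullet> b)\<^sup>2 / (2 * \<sigma>\<^sup>2)))"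
    by (simp add: norm_sq_basis exp_sum[symmetric] sum_divide_distrib[symmetric] sum_negf)
  moreover have "(\<Prod>b\<in>Basis. normal_density 0 \<sigma> (z \<bullet> b)) = (1 / sqrt (2 * pi * \<sigma>\<^sup>2)) ^ DIM('a) * (\<Prod>b\<in>Basis. exp (- (z \<bullet> b)\<^sup>2 / (2 * \<sigma>\<^sup>2)))"
    unfolding normal_density_def diff_zero prod.distrib prod_constant ..
  ultimately show ?thesis
    unfolding gauss_pdf_def by simp
qed

lemma gauss_pdf_pos: "\<sigma> > 0 \<Longrightarrow> gauss_pdf \<sigma> z > 0"
  by (simp add: gauss_pdf_def)

lemma gauss_pdf_nonneg: "\<sigma> > 0 \<Longrightarrow> gauss_pdf \<sigma> z \<ge> 0"
  by (simp add: gauss_pdf_def)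

lemma continuous_gauss_pdf: "\<sigma> > 0 \<Longrightarrow> continuous_on UNIV (gauss_pdf \<sigma>)"
  unfolding gauss_pdf_def[abs_def] by (intro continuous_intros) auto

lemma borel_gauss_pdf[measurable]: "gauss_pdf \<sigma> \<in> borel_measurable borel"
  unfolding gauss_pdf_def[abs_def] by measurable

lemma nn_integral_gauss_pdf:
  assumes "\<sigma> > 0"
  shows "(\<integral>\<^sup>+z. ennreal (gauss_pdf \<sigma> (z::'a::euclidean_space)) \<partial>lborel) = 1"
proof -
  have "(\<integral>\<^sup>+z. ennreal (gauss_pdf \<sigma> (z::'a)) \<partial>lborel)
     = (\<integral>\<^sup>+z. (\<Prod>b\<in>Basis. ennreal (normal_density 0 \<sigma> ((z::'a) \<bullet> b))) \<partial>lborel)"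
    by (intro nn_integral_cong) (simp add: gauss_pdf_prod[OF assms] prod_ennreal)
  also have "\<dots> = (\<Prod>b\<in>(Basis::'a set). (\<integral>\<^sup>+x. ennreal (normal_density 0 \<sigma> x) \<partial>lborel))"
    by (rule nn_integral_lborel_prod) auto
  also have "(\<integral>\<^sup>+x. ennreal (normal_density 0 \<sigma> x) \<partial>lborel) = 1"
    using integrable_normal_density[OF assms, of 0] integral_normal_density[OF assms, of 0]
    by (subst nn_integral_eq_integral) auto
  then have "(\<Prod>b\<in>(Basis::'a set). (\<integral>\<^sup>+x. ennreal (normal_density 0 \<sigma> x) \<partial>lborel)) = 1"
    by simp
  finally show ?thesis .
qed

lemma nn_integral_lborel_translate:
  fixes f :: "'a::euclidean_space \<Rightarrow> ennreal"
  assumes [measurable]: "f \<in> borel_measurable borel"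
  shows "(\<integral>\<^sup>+y. f (y - b) \<partial>lborel) = (\<integral>\<^sup>+z. f z \<partial>lborel)"
proof -
  have "(\<integral>\<^sup>+z. f z \<partial>lborel) = (\<integral>\<^sup>+z. f z \<partial>distr lborel borel ((+) (-b)))"
    by (simp add: lborel_distr_plus)
  also have "\<dots> = (\<integral>\<^sup>+y. f (-b + y) \<partial>lborel)"
    by (subst nn_integral_distr) auto
  finally show ?thesis by simp
qed

lemma prob_space_gauss: "\<sigma> > 0 \<Longrightarrow> prob_space (gauss_measure \<sigma> :: 'a::euclidean_space measure)"
  unfolding gauss_measure_def
  by (rule prob_spaceI) (simp add: emeasure_density nn_integral_gauss_pdf)

lemma alg1: "(s::real) > 0 \<Longrightarrow> -(N - 2*(l * s\<^sup>2 * P) + (l * s\<^sup>2)\<^sup>2*U)/(2 * s\<^sup>2) + l\<^sup>2 * s\<^sup>2 * U/2 = -N/(2 * s\<^sup>2) + l*P"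
  by (simp add: field_simps power2_eq_square)

lemma gauss_mgf:
  assumes "\<sigma> > 0"
  shows "(\<integral>\<^sup>+y. ennreal (gauss_pdf \<sigma> (y - m) * exp (l * ((y - m) \<bullet> u))) \<partial>lborel)
       = ennreal (exp (l\<^sup>2 * \<sigma>\<^sup>2 * (norm (u::'a::euclidean_space))\<^sup>2 / 2))"
proof -
  define a where "a = (l * \<sigma>\<^sup>2) *\<^sub>R u"
  have eq: "gauss_pdf \<sigma> z * exp (l * (z \<bullet> u)) = exp (l\<^sup>2 * \<sigma>\<^sup>2 * (norm u)\<^sup>2 / 2) * gauss_pdf \<sigma> (z - a)" for z
  proof -
    have h1: "(norm (z - a))\<^sup>2 = (norm z)\<^sup>2 - 2 * (z \<bullet> a) + (norm a)\<^sup>2"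
      by (simp add: power2_norm_eq_inner inner_diff_left inner_diff_right inner_commute)
    have h2: "z \<bullet> a = l * \<sigma>\<^sup>2 * (z \<bullet> u)" "(norm a)\<^sup>2 = (l * \<sigma>\<^sup>2)\<^sup>2 * (norm u)\<^sup>2"
      by (auto simp: a_def power_mult_distrib)
    have "- (norm (z - a))\<^sup>2 / (2 * \<sigma>\<^sup>2) + l\<^sup>2 * \<sigma>\<^sup>2 * (norm u)\<^sup>2 / 2
        = - (norm z)\<^sup>2 / (2 * \<sigma>\<^sup>2) + l * (z \<bullet> u)"
      unfolding h1 h2 by (rule alg1[OF assms])
    then have "exp (- (norm (z - a))\<^sup>2 / (2 * \<sigma>\<^sup>2)) * exp (l\<^sup>2 * \<sigma>\<^sup>2 * (norm u)\<^sup>2 / 2)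
        = exp (- (norm z)\<^sup>2 / (2 * \<sigma>\<^sup>2)) * exp (l * (z \<bullet> u))"
      by (simp add: exp_add[symmetric])
    then show ?thesis unfolding gauss_pdf_def by (simp add: ac_simps)
  qed
  have "(\<integral>\<^sup>+y. ennreal (gauss_pdf \<sigma> (y - m) * exp (l * ((y - m) \<bullet> u))) \<partial>lborel)
      = (\<integral>\<^sup>+z. ennreal (gauss_pdf \<sigma> z * exp (l * (z \<bullet> u))) \<partial>lborel)"
    by (rule nn_integral_lborel_translate[where f="\<lambda>z. ennreal (gauss_pdf \<sigma> z * exp (l * (z \<bullet> u)))"]) simp
  also have "\<dots> = (\<integral>\<^sup>+z. ennreal (exp (l\<^sup>2 * \<sigma>\<^sup>2 * (norm u)\<^sup>2 / 2)) * ennreal (gauss_pdf \<sigma> (z - a)) \<partial>lborel)"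
    by (simp add: eq ennreal_mult' gauss_pdf_nonneg[OF assms])
  also have "\<dots> = ennreal (exp (l\<^sup>2 * \<sigma>\<^sup>2 * (norm u)\<^sup>2 / 2)) * (\<integral>\<^sup>+z. ennreal (gauss_pdf \<sigma> (z - a)) \<partial>lborel)"
    by (rule nn_integral_cmult) simp
  also have "(\<integral>\<^sup>+z. ennreal (gauss_pdf \<sigma> (z - a)) \<partial>lborel) = 1"
    by (subst nn_integral_lborel_translate[where f="\<lambda>z. ennreal (gauss_pdf \<sigma> z)"]) (simp_all add: nn_integral_gauss_pdf assms)
  finally show ?thesis by simp
qed



lemma continuous_on_gauss_pdf_comp[continuous_intros]:
  "\<sigma> > 0 \<Longrightarrow> continuous_on S f \<Longrightarrow> continuous_on S (\<lambda>x. gauss_pdf \<sigma> (f x))"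
  using continuous_on_compose2[OF continuous_gauss_pdf[of \<sigma>], of S f] by auto

lemma conv_nn:
  fixes Q0 :: "'a::euclidean_space measure"
  assumes Q: "prob_space Q0" and sQ[measurable_cong]: "sets Q0 = sets borel" and s: "\<sigma> > 0"
   and H[measurable]: "H \<in> borel_measurable borel"
  shows "(\<integral>\<^sup>+y. H y \<partial>gauss_conv Q0 \<sigma>)
       = (\<integral>\<^sup>+y. H y * (\<integral>\<^sup>+m. ennreal (gauss_pdf \<sigma> (y - m)) \<partial>Q0) \<partial>lborel)"
proof -
  interpret Q: prob_space Q0 by fact
  interpret G: prob_space "gauss_measure \<sigma> :: 'a measure" using prob_space_gauss[OF s] .
  interpret QG: pair_sigma_finite Q0 "gauss_measure \<sigma> :: 'a measure" by unfold_locales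
  interpret QL: pair_sigma_finite Q0 "lborel :: 'a measure" by unfold_locales
  have sG[measurable_cong]: "sets (gauss_measure \<sigma> :: 'a measure) = sets borel"
    by (simp add: gauss_measure_def)
  have "(\<integral>\<^sup>+y. H y \<partial>gauss_conv Q0 \<sigma>) = (\<integral>\<^sup>+x. H ((\<lambda>(m,z). m + z) x) \<partial>(Q0 \<Otimes>\<^sub>M gauss_measure \<sigma>))"
    unfolding gauss_conv_def by (rule nn_integral_distr) measurable
  also have "\<dots> = (\<integral>\<^sup>+m. \<integral>\<^sup>+z. H (m + z) \<partial>gauss_measure \<sigma> \<partial>Q0)"
    using G.nn_integral_fst[of "\<lambda>(m,z). H (m + z)" Q0] by (simp add: case_prod_beta')
  also have "\<dots> = (\<integral>\<^sup>+m. \<integral>\<^sup>+y. ennreal (gauss_pdf \<sigma> (y - m)) * H y \<partial>lborel \<partial>Q0)"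
  proof (rule nn_integral_cong)
    fix m :: 'a
    have "(\<integral>\<^sup>+z. H (m + z) \<partial>gauss_measure \<sigma>) = (\<integral>\<^sup>+z. ennreal (gauss_pdf \<sigma> z) * H (m + z) \<partial>lborel)"
      unfolding gauss_measure_def by (rule nn_integral_density) measurable
    also have "\<dots> = (\<integral>\<^sup>+y. ennreal (gauss_pdf \<sigma> (y - m)) * H (m + (y - m)) \<partial>lborel)"
      by (rule nn_integral_lborel_translate[where f="\<lambda>z. ennreal (gauss_pdf \<sigma> z) * H (m + z)", symmetric]) measurable
    finally show "(\<integral>\<^sup>+z. H (m + z) \<partial>gauss_measure \<sigma>) = (\<integral>\<^sup>+y. ennreal (gauss_pdf \<sigma> (y - m)) * H y \<partial>lborel)"
      by simp
  qed
  also have "\<dots> = (\<integral>\<^sup>+y. \<integral>\<^sup>+m. ennreal (gauss_pdf \<sigma> (y - m)) * H y \<partial>Q0 \<partial>lborel)"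
    by (rule QL.Fubini'[symmetric]) measurable
  also have "\<dots> = (\<integral>\<^sup>+y. H y * (\<integral>\<^sup>+m. ennreal (gauss_pdf \<sigma> (y - m)) \<partial>Q0) \<partial>lborel)"
  proof (rule nn_integral_cong)
    fix y :: 'a
    have [measurable]: "(\<lambda>m. ennreal (gauss_pdf \<sigma> (y - m))) \<in> borel_measurable Q0" by measurable
    show "(\<integral>\<^sup>+m. ennreal (gauss_pdf \<sigma> (y - m)) * H y \<partial>Q0) = H y * (\<integral>\<^sup>+m. ennreal (gauss_pdf \<sigma> (y - m)) \<partial>Q0)"
      using nn_integral_cmult[of "\<lambda>m. ennreal (gauss_pdf \<sigma> (y - m))" Q0 "H y"] by (simp add: mult.commute)
  qed
  finally show ?thesis .
qed

lemma cs_weighted: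
  fixes v a :: "'x \<Rightarrow> real"
  assumes iv: "integrable M v" and iva: "integrable M (\<lambda>x. v x * a x)"
    and ivaa: "integrable M (\<lambda>x. v x * (a x)\<^sup>2)" and v: "\<And>x. v x \<ge> 0"
  shows "(\<integral>x. v x * a x \<partial>M)\<^sup>2 \<le> (\<integral>x. v x \<partial>M) * (\<integral>x. v x * (a x)\<^sup>2 \<partial>M)"
proof (cases "(\<integral>x. v x \<partial>M) = 0")
  case True
  then have "AE x in M. v x = 0" using integral_nonneg_eq_0_iff_AE[OF iv] v by auto
  then have "AE x in M. v x * a x = 0" by auto
  then have "(\<integral>x. v x * a x \<partial>M) = 0" by (rule integral_eq_zero_AE)
  then show ?thesis using True by simp
next
  case False
  define W where "W = (\<integral>x. v x \<partial>M)"
  define X where "X = (\<integral>x. v x * a x \<partial>M)"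
  define Bq where "Bq = (\<integral>x. v x * (a x)\<^sup>2 \<partial>M)"
  have "W \<ge> 0" unfolding W_def by (rule Bochner_Integration.integral_nonneg) (simp add: v)
  then have W: "W > 0" using False unfolding W_def by simp
  have eq: "v x * (a x * W - X)\<^sup>2 = W\<^sup>2 * (v x * (a x)\<^sup>2) - (2 * W * X) * (v x * a x) + X\<^sup>2 * v x" for x
    by (simp add: power2_eq_square algebra_simps)
  have "0 \<le> (\<integral>x. v x * (a x * W - X)\<^sup>2 \<partial>M)" by (rule Bochner_Integration.integral_nonneg) (simp add: v)
  also have "\<dots> = (\<integral>x. W\<^sup>2 * (v x * (a x)\<^sup>2) - (2 * W * X) * (v x * a x) + X\<^sup>2 * v x \<partial>M)"
    by (simp only: eq)
  also have "\<dots> = W\<^sup>2 * Bq - (2 * W * X) * X + X\<^sup>2 * W"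
    using iv iva ivaa by (simp add: W_def X_def Bq_def)
  finally have "W * X\<^sup>2 \<le> W * (W * Bq)" by (simp add: power2_eq_square algebra_simps)
  then have "X\<^sup>2 \<le> W * Bq" using W by simp
  then show ?thesis by (simp add: W_def X_def Bq_def)
qed

locale bsupp =
  fixes Q0 :: "'a::euclidean_space measure" and B :: "'a set"
  assumes Q: "prob_space Q0" and sQ[measurable_cong]: "sets Q0 = sets borel"
    and bB: "bounded B" and B[measurable]: "B \<in> sets borel" and QB: "emeasure Q0 B = 1"
begin

sublocale prob_space Q0 by (rule Q)

lemma integrable_cont:
  fixes f :: "'a \<Rightarrow> 'b::{banach,second_countable_topology}"
  assumes "continuous_on UNIV f"
  shows "integrable Q0 f"
proof -
  obtain M x0 where M: "B \<subseteq> cball x0 M" using bB unfolding bounded_subset_cball by blast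
  have "compact (f ` cball x0 M)"
    by (rule compact_continuous_image[OF continuous_on_subset[OF assms subset_UNIV] compact_cball])
  then have "bounded (f ` cball x0 M)" by (rule compact_imp_bounded)
  then obtain K where K: "\<forall>x\<in>cball x0 M. norm (f x) \<le> K"
    unfolding bounded_iff by auto
  have "AE x in Q0. x \<in> B"
    by (rule AE_prob_1) (simp add: measure_def QB)
  then have "AE x in Q0. norm (f x) \<le> K"
  proof (rule AE_mp, intro AE_I2 impI)
    fix x assume "x \<in> B" then show "norm (f x) \<le> K" using K M by blast
  qed
  moreover have "f \<in> borel_measurable Q0"
    by (subst measurable_cong_sets[OF sQ refl]) (rule borel_measurable_continuous_onI[OF assms])
  ultimately show ?thesis by (rule integrable_const_bound)
qed

lemma integrable_ind_cont:
  fixes f :: "'a \<Rightarrow> 'b::{banach,second_countable_topology}"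
  assumes "continuous_on UNIV f" "A \<in> sets borel"
  shows "integrable Q0 (\<lambda>x. indicator A x *\<^sub>R f x)"
  by (rule integrable_mult_indicator) (simp_all add: sQ assms(2) integrable_cont[OF assms(1)])

lemma integrable_ind_cont_real:
  fixes f :: "'a \<Rightarrow> real"
  assumes "continuous_on UNIV f" "A \<in> sets borel"
  shows "integrable Q0 (\<lambda>x. indicator A x * f x)"
  using integrable_ind_cont[OF assms] by simp

lemma post_bound:
  fixes c y :: 'a and \<sigma> r :: real
  assumes s: "\<sigma> > 0" and r: "r \<ge> 0" and pos: "measure Q0 (cball c r) > 0"
  shows "(\<integral>\<mu>. gauss_pdf \<sigma> (y - \<mu>) \<partial>Q0) * (norm (post_mean Q0 \<sigma> y - post_mean (cond_measure Q0 (cball c r)) \<sigma> y))\<^sup>2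
     \<le> (\<integral>\<mu>. gauss_pdf \<sigma> (y - \<mu>) * (indicator (- cball c r) \<mu> * (2 * (norm (\<mu> - c))\<^sup>2 + 2 * r\<^sup>2)) \<partial>Q0)"
proof -
  define S where "S = cball c r"
  define w where "w = (\<lambda>\<mu>. gauss_pdf \<sigma> (y - \<mu>))"
  define q where "q = measure Q0 S"
  have q: "q > 0" using pos by (simp add: q_def S_def)
  have S[measurable]: "S \<in> sets borel" by (simp add: S_def)
  have C[measurable]: "- S \<in> sets borel" by simp
  have wpos: "\<And>\<mu>. w \<mu> > 0" by (simp add: w_def gauss_pdf_pos s)
  have cw: "continuous_on UNIV w" unfolding w_def using s by (intro continuous_intros) auto
  have wm[measurable]: "w \<in> borel_measurable borel" unfolding w_def by measurable
  have spQ: "space Q0 = UNIV" using sets_eq_imp_space_eq[OF sQ] by simp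
  define Z where "Z = (\<integral>\<mu>. w \<mu> \<partial>Q0)"
  define A where "A = (\<integral>\<mu>. w \<mu> *\<^sub>R \<mu> \<partial>Q0)"
  define ZS where "ZS = (\<integral>\<mu>. indicator S \<mu> * w \<mu> \<partial>Q0)"
  define AS where "AS = (\<integral>\<mu>. indicator S \<mu> *\<^sub>R (w \<mu> *\<^sub>R \<mu>) \<partial>Q0)"
  have cwm: "continuous_on UNIV (\<lambda>\<mu>. w \<mu> *\<^sub>R \<mu>)" by (intro continuous_intros cw)
  have intw: "integrable Q0 w" by (rule integrable_cont[OF cw])
  have intwm: "integrable Q0 (\<lambda>\<mu>. w \<mu> *\<^sub>R \<mu>)" by (rule integrable_cont[OF cwm])
  have intSw: "integrable Q0 (\<lambda>\<mu>. indicator S \<mu> * w \<mu>)" by (rule integrable_ind_cont_real[OF cw S])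
  have intSwm: "integrable Q0 (\<lambda>\<mu>. indicator S \<mu> *\<^sub>R (w \<mu> *\<^sub>R \<mu>))" by (rule integrable_ind_cont[OF cwm S])

  have pm1: "post_mean Q0 \<sigma> y = A /\<^sub>R Z" by (simp add: post_mean_def A_def Z_def w_def)
  have d1: "(\<integral>\<mu>. w \<mu> *\<^sub>R \<mu> \<partial>cond_measure Q0 S) = (1/q) *\<^sub>R AS"
  proof -
    have "(\<integral>\<mu>. w \<mu> *\<^sub>R \<mu> \<partial>cond_measure Q0 S) = (\<integral>\<mu>. (indicator S \<mu> / q) *\<^sub>R (w \<mu> *\<^sub>R \<mu>) \<partial>Q0)"
      unfolding cond_measure_def q_def[symmetric] by (rule integral_density) (auto simp: q less_imp_le)
    also have "\<dots> = (\<integral>\<mu>. (1/q) *\<^sub>R (indicator S \<mu> *\<^sub>R (w \<mu> *\<^sub>R \<mu>)) \<partial>Q0)"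
      by (rule Bochner_Integration.integral_cong) auto
    finally show ?thesis by (simp only: integral_scaleR_right AS_def)
  qed
  have d2: "(\<integral>\<mu>. w \<mu> \<partial>cond_measure Q0 S) = (1/q) * ZS"
  proof -
    have "(\<integral>\<mu>. w \<mu> \<partial>cond_measure Q0 S) = (\<integral>\<mu>. (indicator S \<mu> / q) *\<^sub>R w \<mu> \<partial>Q0)"
      unfolding cond_measure_def q_def[symmetric] by (rule integral_density) (auto simp: q less_imp_le)
    also have "\<dots> = (\<integral>\<mu>. (1/q) * (indicator S \<mu> * w \<mu>) \<partial>Q0)"
      by (rule Bochner_Integration.integral_cong) auto
    finally show ?thesis by (simp only: integral_mult_right_zero ZS_def)
  qed
  have pm2: "post_mean (cond_measure Q0 S) \<sigma> y = AS /\<^sub>R ZS"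
    unfolding post_mean_def using d1 d2 q by (simp add: w_def inverse_eq_divide)
  have ZS0: "ZS \<ge> 0" unfolding ZS_def by (rule Bochner_Integration.integral_nonneg) (simp add: less_imp_le wpos)
  have ZS: "ZS > 0"
  proof (rule ccontr)
    assume "\<not> ZS > 0"
    then have "ZS = 0" using ZS0 by simp
    then have "AE \<mu> in Q0. indicator S \<mu> * w \<mu> = 0"
      using integral_nonneg_eq_0_iff_AE[OF intSw] wpos unfolding ZS_def by (simp add: less_imp_le)
    then have "AE \<mu> in Q0. \<mu> \<notin> S"
    proof (rule AE_mp, intro AE_I2 impI)
      fix \<mu> assume "indicator S \<mu> * w \<mu> = 0"
      then show "\<mu> \<notin> S" using wpos[of \<mu>] by (auto simp: indicator_def split: if_splits)
    qed
    then have "emeasure Q0 S = 0" by (subst (asm) AE_iff_measurable[of S]) (auto simp: spQ sQ)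
    then show False using q unfolding q_def by (simp add: measure_def)
  qed
  define m where "m = AS /\<^sub>R ZS"
  have hm: "norm (m - c) \<le> r"
  proof -
    have e1: "(\<integral>\<mu>. indicator S \<mu> *\<^sub>R (w \<mu> *\<^sub>R (\<mu> - c)) \<partial>Q0) = AS - ZS *\<^sub>R c"
    proof -
      have "(\<integral>\<mu>. indicator S \<mu> *\<^sub>R (w \<mu> *\<^sub>R (\<mu> - c)) \<partial>Q0)
          = (\<integral>\<mu>. indicator S \<mu> *\<^sub>R (w \<mu> *\<^sub>R \<mu>) - (indicator S \<mu> * w \<mu>) *\<^sub>R c \<partial>Q0)"
        by (rule Bochner_Integration.integral_cong) (auto simp: algebra_simps)
      also have "\<dots> = AS - ZS *\<^sub>R c"
        using intSwm intSw by (simp add: AS_def ZS_def)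
      finally show ?thesis .
    qed
    have "norm (AS - ZS *\<^sub>R c) \<le> (\<integral>\<mu>. norm (indicator S \<mu> *\<^sub>R (w \<mu> *\<^sub>R (\<mu> - c))) \<partial>Q0)"
      unfolding e1[symmetric] by (rule Bochner_Integration.integral_norm_bound)
    also have "\<dots> \<le> (\<integral>\<mu>. r * (indicator S \<mu> * w \<mu>) \<partial>Q0)"
    proof (rule Bochner_Integration.integral_mono)
      show "integrable Q0 (\<lambda>\<mu>. norm (indicator S \<mu> *\<^sub>R (w \<mu> *\<^sub>R (\<mu> - c))))"
        by (intro integrable_norm integrable_ind_cont S continuous_intros cw)
      show "integrable Q0 (\<lambda>\<mu>. r * (indicator S \<mu> * w \<mu>))" using intSw by simp
      fix \<mu> show "norm (indicator S \<mu> *\<^sub>R (w \<mu> *\<^sub>R (\<mu> - c))) \<le> r * (indicator S \<mu> * w \<mu>)"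
        using wpos[of \<mu>] by (auto simp: S_def indicator_def dist_norm norm_minus_commute mult.commute less_imp_le)
    qed
    also have "\<dots> = r * ZS" by (simp add: ZS_def)
    finally have nr: "norm (AS - ZS *\<^sub>R c) \<le> r * ZS" .
    have e: "m - c = (1 / ZS) *\<^sub>R (AS - ZS *\<^sub>R c)"
      using ZS by (simp add: m_def algebra_simps divide_inverse)
    have "norm (m - c) = norm (AS - ZS *\<^sub>R c) / ZS" using ZS by (simp add: e)
    also have "\<dots> \<le> r * ZS / ZS" using nr ZS by (intro divide_right_mono) auto
    also have "\<dots> = r" using ZS by simp
    finally show ?thesis .
  qed
  have Z: "Z > 0"
  proof -
    have "ZS \<le> Z" unfolding ZS_def Z_def
      by (rule Bochner_Integration.integral_mono[OF intSw intw]) (auto simp: indicator_def less_imp_le wpos)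
    then show ?thesis using ZS by simp
  qed
  have cwmm: "continuous_on UNIV (\<lambda>\<mu>. w \<mu> *\<^sub>R (\<mu> - m))" by (intro continuous_intros cw)
  have intSwmm: "integrable Q0 (\<lambda>\<mu>. indicator S \<mu> *\<^sub>R (w \<mu> *\<^sub>R (\<mu> - m)))"
    by (rule integrable_ind_cont[OF cwmm S])
  have intwmm: "integrable Q0 (\<lambda>\<mu>. w \<mu> *\<^sub>R (\<mu> - m))" by (rule integrable_cont[OF cwmm])
  have D0: "(\<integral>\<mu>. indicator S \<mu> *\<^sub>R (w \<mu> *\<^sub>R (\<mu> - m)) \<partial>Q0) = 0"
  proof -
    have "(\<integral>\<mu>. indicator S \<mu> *\<^sub>R (w \<mu> *\<^sub>R (\<mu> - m)) \<partial>Q0)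
        = (\<integral>\<mu>. indicator S \<mu> *\<^sub>R (w \<mu> *\<^sub>R \<mu>) - (indicator S \<mu> * w \<mu>) *\<^sub>R m \<partial>Q0)"
      by (rule Bochner_Integration.integral_cong) (auto simp: algebra_simps)
    also have "\<dots> = AS - ZS *\<^sub>R m"
      using intSwm intSw by (simp add: AS_def ZS_def)
    also have "\<dots> = 0" using ZS by (simp add: m_def)
    finally show ?thesis .
  qed
  have Dfull: "(\<integral>\<mu>. w \<mu> *\<^sub>R (\<mu> - m) \<partial>Q0) = A - Z *\<^sub>R m"
  proof -
    have "(\<integral>\<mu>. w \<mu> *\<^sub>R (\<mu> - m) \<partial>Q0) = (\<integral>\<mu>. w \<mu> *\<^sub>R \<mu> - w \<mu> *\<^sub>R m \<partial>Q0)"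
      by (rule Bochner_Integration.integral_cong) (auto simp: algebra_simps)
    also have "\<dots> = A - Z *\<^sub>R m"
      using intwm intw by (simp add: A_def Z_def)
    finally show ?thesis .
  qed
  define D where "D = A - Z *\<^sub>R m"
  have Dsplit: "(\<integral>\<mu>. indicator (- S) \<mu> *\<^sub>R (w \<mu> *\<^sub>R (\<mu> - m)) \<partial>Q0) = D"
  proof -
    have "(\<integral>\<mu>. indicator (- S) \<mu> *\<^sub>R (w \<mu> *\<^sub>R (\<mu> - m)) \<partial>Q0)
        = (\<integral>\<mu>. w \<mu> *\<^sub>R (\<mu> - m) - indicator S \<mu> *\<^sub>R (w \<mu> *\<^sub>R (\<mu> - m)) \<partial>Q0)"
      by (rule Bochner_Integration.integral_cong) (auto simp: indicator_def)
    also have "\<dots> = D"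
      using intwmm intSwmm Dfull D0 by (simp add: D_def)
    finally show ?thesis .
  qed
  define X where "X = (\<integral>\<mu>. indicator (- S) \<mu> * w \<mu> * norm (\<mu> - m) \<partial>Q0)"
  define W where "W = (\<integral>\<mu>. indicator (- S) \<mu> * w \<mu> \<partial>Q0)"
  define Bq where "Bq = (\<integral>\<mu>. indicator (- S) \<mu> * w \<mu> * (norm (\<mu> - m))\<^sup>2 \<partial>Q0)"
  have i1: "integrable Q0 (\<lambda>\<mu>. indicator (- S) \<mu> * w \<mu>)" by (rule integrable_ind_cont_real[OF cw C])
  have i2: "integrable Q0 (\<lambda>\<mu>. indicator (- S) \<mu> * w \<mu> * norm (\<mu> - m))"
    using integrable_ind_cont_real[of "\<lambda>\<mu>. w \<mu> * norm (\<mu> - m)" "- S"] cw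
    by (simp add: mult.assoc continuous_intros)
  have i3: "integrable Q0 (\<lambda>\<mu>. indicator (- S) \<mu> * w \<mu> * (norm (\<mu> - m))\<^sup>2)"
    using integrable_ind_cont_real[of "\<lambda>\<mu>. w \<mu> * (norm (\<mu> - m))\<^sup>2" "- S"] cw
    by (simp add: mult.assoc continuous_intros)
  have DX: "norm D \<le> X"
  proof -
    have "norm D \<le> (\<integral>\<mu>. norm (indicator (- S) \<mu> *\<^sub>R (w \<mu> *\<^sub>R (\<mu> - m))) \<partial>Q0)"
      unfolding Dsplit[symmetric] by (rule Bochner_Integration.integral_norm_bound)
    also have "\<dots> = X" unfolding X_def
      by (rule Bochner_Integration.integral_cong) (auto simp: less_imp_le wpos)
    finally show ?thesis .
  qed
  have CS: "X\<^sup>2 \<le> W * Bq"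
    unfolding X_def W_def Bq_def
    by (rule cs_weighted[OF i1 i2 i3]) (simp add: less_imp_le wpos)
  have WZ: "W \<le> Z" unfolding W_def Z_def
    by (rule Bochner_Integration.integral_mono[OF i1 intw]) (auto simp: indicator_def less_imp_le wpos)
  have Bq0: "Bq \<ge> 0" unfolding Bq_def
    by (rule Bochner_Integration.integral_nonneg) (simp add: less_imp_le wpos)
  have nb: "(norm (\<mu> - m))\<^sup>2 \<le> 2 * (norm (\<mu> - c))\<^sup>2 + 2 * r\<^sup>2" for \<mu>
  proof -
    have "norm (\<mu> - m) \<le> norm (\<mu> - c) + norm (c - m)"
      using norm_triangle_ineq[of "\<mu> - c" "c - m"] by simp
    also have "\<dots> \<le> norm (\<mu> - c) + r" using hm by (simp add: norm_minus_commute)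
    finally have "(norm (\<mu> - m))\<^sup>2 \<le> (norm (\<mu> - c) + r)\<^sup>2"
      by (rule power_mono) simp
    also have "\<dots> \<le> 2 * (norm (\<mu> - c))\<^sup>2 + 2 * r\<^sup>2"
      using sum_squares_bound[of "norm (\<mu> - c)" r] by (simp add: power2_sum)
    finally show ?thesis .
  qed
  define T where "T = (\<integral>\<mu>. w \<mu> * (indicator (- cball c r) \<mu> * (2 * (norm (\<mu> - c))\<^sup>2 + 2 * r\<^sup>2)) \<partial>Q0)"
  have BT: "Bq \<le> T" unfolding Bq_def T_def
  proof (rule Bochner_Integration.integral_mono[OF i3])
    show "integrable Q0 (\<lambda>\<mu>. w \<mu> * (indicator (- cball c r) \<mu> * (2 * (norm (\<mu> - c))\<^sup>2 + 2 * r\<^sup>2)))"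
      using integrable_ind_cont_real[of "\<lambda>\<mu>. w \<mu> * (2 * (norm (\<mu> - c))\<^sup>2 + 2 * r\<^sup>2)" "- S"] cw
      by (simp add: S_def ac_simps continuous_intros)
    fix \<mu>
    show "indicator (- S) \<mu> * w \<mu> * (norm (\<mu> - m))\<^sup>2 \<le> w \<mu> * (indicator (- cball c r) \<mu> * (2 * (norm (\<mu> - c))\<^sup>2 + 2 * r\<^sup>2))"
      using nb[of \<mu>] wpos[of \<mu>] by (auto simp: S_def indicator_def)
  qed
  have "A /\<^sub>R Z - m = (1 / Z) *\<^sub>R D" using Z by (simp add: D_def algebra_simps divide_inverse)
  then have "Z * (norm (A /\<^sub>R Z - m))\<^sup>2 = (norm D)\<^sup>2 / Z" using Z
    by (simp add: power2_eq_square field_simps)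
  also have "\<dots> \<le> X\<^sup>2 / Z" using DX Z
    by (intro divide_right_mono power_mono) auto
  also have "\<dots> \<le> W * Bq / Z" using CS Z by (intro divide_right_mono) auto
  also have "\<dots> \<le> Z * Bq / Z" using WZ Bq0 Z by (intro divide_right_mono mult_right_mono) auto
  also have "\<dots> = Bq" using Z by simp
  also have "\<dots> \<le> T" by (rule BT)
  finally show ?thesis
    unfolding pm1 T_def Z_def m_def S_def[symmetric] pm2 w_def .
qed

end



lemma tail_alg:
  fixes \<rho> R U t :: real
  assumes "R \<ge> 0" "\<rho> > R" "U > 0" "U \<le> (\<rho> + R)\<^sup>2" "t = (\<rho>\<^sup>2 - R\<^sup>2) / 2" "\<sigma> > 0"
  shows "(\<rho> - R)\<^sup>2 / (8 * \<sigma>\<^sup>2) \<le> t\<^sup>2 / (2 * \<sigma>\<^sup>2 * U)"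
proof -
  have h2: "2 * t = (\<rho> - R) * (\<rho> + R)" using assms(5) by (simp add: power2_eq_square algebra_simps)
  have "4 * t\<^sup>2 = (2 * t)\<^sup>2" by (simp add: power2_eq_square)
  also have "\<dots> = (\<rho> - R)\<^sup>2 * (\<rho> + R)\<^sup>2" unfolding h2 by (simp add: power_mult_distrib)
  finally have "4 * t\<^sup>2 = (\<rho> - R)\<^sup>2 * (\<rho> + R)\<^sup>2" .
  have "(\<rho> - R)\<^sup>2 * U \<le> (\<rho> - R)\<^sup>2 * (\<rho> + R)\<^sup>2" using assms(4) by (intro mult_left_mono) auto
  then have h: "(\<rho> - R)\<^sup>2 * U \<le> 4 * t\<^sup>2" using \<open>4 * t\<^sup>2 = (\<rho> - R)\<^sup>2 * (\<rho> + R)\<^sup>2\<close> by simp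
  have "(\<rho> - R)\<^sup>2 / (8 * \<sigma>\<^sup>2) = ((\<rho> - R)\<^sup>2 * U) / (8 * \<sigma>\<^sup>2 * U)" using assms by simp
  also have "\<dots> \<le> (4 * t\<^sup>2) / (8 * \<sigma>\<^sup>2 * U)" by (rule divide_right_mono[OF h]) (use assms(3,6) in simp)
  also have "\<dots> = t\<^sup>2 / (2 * \<sigma>\<^sup>2 * U)" by simp
  finally show ?thesis .
qed

lemma voronoi_tail:
  fixes \<mu> c c' :: "'a::euclidean_space"
  assumes s: "\<sigma> > 0" and R: "R \<ge> 0" and e: "norm (\<mu> - c') \<le> R" and d: "norm (\<mu> - c) > R"
    and Vm[measurable]: "V \<in> sets borel" and Vd: "\<forall>y\<in>V. dist y c \<le> dist y c'"
  shows "(\<integral>\<^sup>+y. indicator V y * ennreal (gauss_pdf \<sigma> (y - \<mu>)) \<partial>lborel)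
         \<le> ennreal (exp (- (norm (\<mu> - c) - R)\<^sup>2 / (8 * \<sigma>\<^sup>2)))"
proof -
  define u where "u = c - c'"
  define \<rho> where "\<rho> = norm (\<mu> - c)"
  define t where "t = (\<rho>\<^sup>2 - R\<^sup>2) / 2"
  define U where "U = (norm u)\<^sup>2"
  have "u \<noteq> 0" using e d by (auto simp: u_def)
  then have U: "U > 0" by (simp add: U_def)
  have "norm u \<le> \<rho> + R" unfolding u_def \<rho>_def
    using norm_triangle_ineq[of "c - \<mu>" "\<mu> - c'"] e by (simp add: norm_minus_commute)
  then have UB: "U \<le> (\<rho> + R)\<^sup>2" unfolding U_def by (rule power_mono) simp
  define l where "l = t / (\<sigma>\<^sup>2 * U)"
  have t0: "t \<ge> 0" using d R unfolding t_def \<rho>_def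
    by (simp add: power_mono)
  have l0: "l \<ge> 0" using t0 U by (simp add: l_def)
  have key: "indicator V y \<le> exp (l * (((y - \<mu>) \<bullet> u) - t))" for y
  proof (cases "y \<in> V")
    case True
    then have "dist y c \<le> dist y c'" using Vd by auto
    then have n1: "(norm (y - c))\<^sup>2 \<le> (norm (y - c'))\<^sup>2" by (simp add: dist_norm power_mono)
    define z where "z = y - \<mu>"
    define dd where "dd = c - \<mu>"
    define ee where "ee = c' - \<mu>"
    have ex: "(norm (z - a))\<^sup>2 = (norm z)\<^sup>2 - 2 * (z \<bullet> a) + (norm a)\<^sup>2" for a :: 'a
      by (simp add: power2_norm_eq_inner inner_diff_left inner_diff_right inner_commute)
    have "y - c = z - dd" "y - c' = z - ee" by (simp_all add: z_def dd_def ee_def)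
    then have n2: "(norm z)\<^sup>2 - 2 * (z \<bullet> dd) + (norm dd)\<^sup>2 \<le> (norm z)\<^sup>2 - 2 * (z \<bullet> ee) + (norm ee)\<^sup>2"
      using n1 ex by metis
    have n3: "(norm ee)\<^sup>2 \<le> R\<^sup>2" using e by (simp add: ee_def norm_minus_commute power_mono)
    have n4: "norm dd = \<rho>" by (simp add: dd_def \<rho>_def norm_minus_commute)
    have n5: "z \<bullet> u = z \<bullet> dd - z \<bullet> ee" by (simp add: u_def dd_def ee_def inner_diff_right)
    have "t \<le> (y - \<mu>) \<bullet> u"
      unfolding z_def[symmetric] n5 t_def using n2 n3 n4 by simp
    then have "0 \<le> l * (((y - \<mu>) \<bullet> u) - t)" using l0 by simp
    then show ?thesis using True by simp
  qed simp
  have "(\<integral>\<^sup>+y. indicator V y * ennreal (gauss_pdf \<sigma> (y - \<mu>)) \<partial>lborel)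
      \<le> (\<integral>\<^sup>+y. ennreal (exp (- l * t)) * ennreal (gauss_pdf \<sigma> (y - \<mu>) * exp (l * ((y - \<mu>) \<bullet> u))) \<partial>lborel)"
  proof (rule nn_integral_mono)
    fix y
    have "indicator V y * gauss_pdf \<sigma> (y - \<mu>) \<le> exp (l * (((y - \<mu>) \<bullet> u) - t)) * gauss_pdf \<sigma> (y - \<mu>)"
      using key[of y] gauss_pdf_nonneg[OF s] by (intro mult_right_mono) auto
    also have "\<dots> = exp (- l * t) * (gauss_pdf \<sigma> (y - \<mu>) * exp (l * ((y - \<mu>) \<bullet> u)))"
      by (simp add: exp_diff right_diff_distrib exp_minus field_simps)
    finally have rl: "indicator V y * gauss_pdf \<sigma> (y - \<mu>) \<le> exp (- l * t) * (gauss_pdf \<sigma> (y - \<mu>) * exp (l * ((y - \<mu>) \<bullet> u)))" .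
    have eqm: "ennreal (exp (- l * t)) * ennreal (gauss_pdf \<sigma> (y - \<mu>) * exp (l * ((y - \<mu>) \<bullet> u)))
        = ennreal (exp (- l * t) * (gauss_pdf \<sigma> (y - \<mu>) * exp (l * ((y - \<mu>) \<bullet> u))))"
      by (rule ennreal_mult'[symmetric]) simp
    show "indicator V y * ennreal (gauss_pdf \<sigma> (y - \<mu>)) \<le> ennreal (exp (- l * t)) * ennreal (gauss_pdf \<sigma> (y - \<mu>) * exp (l * ((y - \<mu>) \<bullet> u)))"
    proof (cases "y \<in> V")
      case True
      then have "gauss_pdf \<sigma> (y - \<mu>) \<le> exp (- l * t) * (gauss_pdf \<sigma> (y - \<mu>) * exp (l * ((y - \<mu>) \<bullet> u)))"
        using rl by simp
      then show ?thesis unfolding eqm using True by (simp add: ennreal_leI)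
    qed simp
  qed
  also have "\<dots> = ennreal (exp (- l * t)) * (\<integral>\<^sup>+y. ennreal (gauss_pdf \<sigma> (y - \<mu>) * exp (l * ((y - \<mu>) \<bullet> u))) \<partial>lborel)"
    by (rule nn_integral_cmult) measurable
  also have "\<dots> = ennreal (exp (- l * t) * exp (l\<^sup>2 * \<sigma>\<^sup>2 * U / 2))"
    by (simp add: gauss_mgf[OF s] U_def ennreal_mult'[symmetric])
  also have "exp (- l * t) * exp (l\<^sup>2 * \<sigma>\<^sup>2 * U / 2) = exp (- (t\<^sup>2 / (2 * \<sigma>\<^sup>2 * U)))"
  proof -
    have "- l * t + l\<^sup>2 * \<sigma>\<^sup>2 * U / 2 = - (t\<^sup>2 / (2 * \<sigma>\<^sup>2 * U))"
      using U s by (simp add: l_def power2_eq_square field_simps)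
    then show ?thesis by (simp add: exp_add[symmetric])
  qed
  also have "exp (- (t\<^sup>2 / (2 * \<sigma>\<^sup>2 * U))) \<le> exp (- (norm (\<mu> - c) - R)\<^sup>2 / (8 * \<sigma>\<^sup>2))"
    using tail_alg[OF R _ U UB t_def s] d unfolding \<rho>_def by simp
  finally show ?thesis by (simp add: ennreal_leI)
qed

lemma xexp: "(x::real) * exp (- x) \<le> 1"
proof -
  have "x \<le> exp x" using exp_ge_add_one_self[of x] by linarith
  then have "x * exp (- x) \<le> exp x * exp (- x)" by (intro mult_right_mono) auto
  then show ?thesis by (simp add: exp_minus)
qed

lemma scalar_bound:
  fixes \<sigma> R \<epsilon> k R' r :: real
  assumes s: "\<sigma> > 0" and R: "R \<ge> 0" and e: "\<epsilon> > 0" and L: "ln (k / \<epsilon>) \<ge> 0" and k: "k > 0"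
    and R': "R' = 3 * R + 2 * sqrt 2 * \<sigma> * sqrt (ln (k / \<epsilon>))" and r: "r > R'"
  shows "(2 * r\<^sup>2 + 2 * R'\<^sup>2) * exp (- (r - R)\<^sup>2 / (8 * \<sigma>\<^sup>2)) \<le> (32 * \<sigma>\<^sup>2 + 6 * R'\<^sup>2) * \<epsilon> / k"
proof -
  define L where "L = ln (k / \<epsilon>)"
  define v where "v = r - R'"
  define s0 where "s0 = R' - R"
  have v: "v > 0" using r by (simp add: v_def)
  have sq: "sqrt L \<ge> 0" using L by (simp add: L_def)
  have s0: "s0 \<ge> 2 * sqrt 2 * \<sigma> * sqrt L" using R' R by (simp add: s0_def L_def)
  have s00: "2 * sqrt 2 * \<sigma> * sqrt L \<ge> 0" using s sq by simp
  have "s0\<^sup>2 \<ge> (2 * sqrt 2 * \<sigma> * sqrt L)\<^sup>2" using s0 s00 by (intro power_mono) auto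
  also have "(2 * sqrt 2 * \<sigma> * sqrt L)\<^sup>2 = 8 * \<sigma>\<^sup>2 * L" using L by (simp add: L_def power_mult_distrib)
  finally have s0L: "8 * \<sigma>\<^sup>2 * L \<le> s0\<^sup>2" .
  have rR: "r - R = s0 + v" by (simp add: s0_def v_def)
  have s0pos: "s0 \<ge> 0" using s0 s00 by linarith
  have "(r - R)\<^sup>2 \<ge> s0\<^sup>2 + v\<^sup>2" unfolding rR using s0pos v
    by (simp add: power2_sum)
  then have a2: "(s0\<^sup>2 + v\<^sup>2) / (8 * \<sigma>\<^sup>2) \<le> (r - R)\<^sup>2 / (8 * \<sigma>\<^sup>2)"
    by (intro divide_right_mono) auto
  have a1: "L \<le> s0\<^sup>2 / (8 * \<sigma>\<^sup>2)" using s0L s by (simp add: le_divide_eq ac_simps)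
  have "L + v\<^sup>2 / (8 * \<sigma>\<^sup>2) \<le> s0\<^sup>2 / (8 * \<sigma>\<^sup>2) + v\<^sup>2 / (8 * \<sigma>\<^sup>2)" using a1 by simp
  also have "\<dots> = (s0\<^sup>2 + v\<^sup>2) / (8 * \<sigma>\<^sup>2)" by (simp add: add_divide_distrib)
  also have "\<dots> \<le> (r - R)\<^sup>2 / (8 * \<sigma>\<^sup>2)" by (rule a2)
  finally have "L + v\<^sup>2 / (8 * \<sigma>\<^sup>2) \<le> (r - R)\<^sup>2 / (8 * \<sigma>\<^sup>2)" .
  then have ex: "exp (- (r - R)\<^sup>2 / (8 * \<sigma>\<^sup>2)) \<le> exp (- L) * exp (- (v\<^sup>2 / (8 * \<sigma>\<^sup>2)))"
    by (simp add: exp_add[symmetric])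
  have eL: "exp (- L) = \<epsilon> / k" using e k by (simp add: L_def exp_minus)
  have r2: "2 * r\<^sup>2 + 2 * R'\<^sup>2 \<le> 6 * R'\<^sup>2 + 4 * v\<^sup>2"
  proof -
    have "r = R' + v" by (simp add: v_def)
    then have "r\<^sup>2 \<le> 2 * R'\<^sup>2 + 2 * v\<^sup>2"
      using sum_squares_bound[of R' v] by (simp add: power2_sum)
    then show ?thesis by simp
  qed
  define x where "x = v\<^sup>2 / (8 * \<sigma>\<^sup>2)"
  have x0: "x \<ge> 0" by (simp add: x_def)
  have "(2 * r\<^sup>2 + 2 * R'\<^sup>2) * exp (- (r - R)\<^sup>2 / (8 * \<sigma>\<^sup>2))
      \<le> (6 * R'\<^sup>2 + 4 * v\<^sup>2) * (exp (- L) * exp (- x))"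
    using r2 ex unfolding x_def by (intro mult_mono) auto
  also have "\<dots> = (6 * R'\<^sup>2 * exp (- x) + 32 * \<sigma>\<^sup>2 * (x * exp (- x))) * exp (- L)"
    using s by (simp add: x_def field_simps)
  also have "\<dots> \<le> (6 * R'\<^sup>2 + 32 * \<sigma>\<^sup>2) * exp (- L)"
  proof -
    have "exp (- x) \<le> 1" using x0 by simp
    then have "6 * R'\<^sup>2 * exp (- x) \<le> 6 * R'\<^sup>2" by (intro mult_left_le) auto
    moreover have "32 * \<sigma>\<^sup>2 * (x * exp (- x)) \<le> 32 * \<sigma>\<^sup>2" using xexp[of x] by (intro mult_left_le) auto
    ultimately show ?thesis by (intro mult_right_mono) auto
  qed
  also have "\<dots> = (32 * \<sigma>\<^sup>2 + 6 * R'\<^sup>2) * \<epsilon> / k" using eL by simp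
  finally show ?thesis .
qed



theorem lemma5p1:
  fixes Q0 :: "'a::euclidean_space measure"
    and \<sigma> R \<epsilon> :: real and C :: "'a set" and V :: "'a \<Rightarrow> 'a set"
    and floc :: "'a \<Rightarrow> 'a"
  assumes "prob_space Q0" and "sets Q0 = sets borel"
    and "\<exists>B. bounded B \<and> B \<in> sets borel \<and> emeasure Q0 B = 1"
    and "\<sigma> > 0" and "R > 0" and "0 < \<epsilon>" and "\<epsilon> < 1"
    and "warm_starts Q0 R C"
    and "voronoi_partition C V"
    and "R' = 3 * R + 2 * sqrt 2 * \<sigma> * sqrt (ln (real (card C) / \<epsilon>))"
    and "\<forall>c\<in>C. measure Q0 (cball c R') > 0"
    and "\<forall>c\<in>C. \<forall>y\<in>V c. floc y = post_mean (cond_measure Q0 (cball c R')) \<sigma> y"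
  shows "(\<integral>\<^sup>+ y. ennreal ((norm (post_mean Q0 \<sigma> y - floc y))\<^sup>2) \<partial>(gauss_conv Q0 \<sigma>))
           \<le> ennreal ((32 * \<sigma>\<^sup>2 + 6 * R'\<^sup>2) * \<epsilon>)"
proof -
  note s = assms(4) and R0 = assms(5) and e0 = assms(6) and e1 = assms(7)
  from assms(3) obtain B where B: "bounded B" "B \<in> sets borel" "emeasure Q0 B = 1" by blast
  interpret bsupp Q0 B by (rule bsupp.intro[OF assms(1,2) B])
  have sQ[measurable_cong]: "sets Q0 = sets borel" by (rule assms(2))
  have sfQ: "sigma_finite_measure Q0" by (rule prob_space_imp_sigma_finite[OF assms(1)])
  interpret QL: pair_sigma_finite Q0 "lborel :: 'a measure" by (intro pair_sigma_finite.intro sfQ sigma_finite_lborel)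
  have spQ: "space Q0 = UNIV" using sets_eq_imp_space_eq[OF sQ] by simp
  have finC: "finite C" and cover: "emeasure Q0 (\<Union>c\<in>C. cball c R) = 1"
    using assms(8) by (auto simp: warm_starts_def)
  have Cne: "C \<noteq> {}"
  proof
    assume "C = {}"
    then show False using cover by simp
  qed
  define k where "k = real (card C)"
  have "0 < card C" using finC Cne by (simp add: card_gt_0_iff)
  then have k1: "k \<ge> 1" by (simp add: k_def)
  have "k / \<epsilon> > 1" using k1 e0 e1 by (simp add: less_divide_eq_1)
  then have Lpos: "ln (k / \<epsilon>) > 0" by (rule ln_gt_zero)
  have R'def: "R' = 3 * R + 2 * sqrt 2 * \<sigma> * sqrt (ln (k / \<epsilon>))" using assms(10) by (simp only: k_def)
  have "0 \<le> 2 * sqrt 2 * \<sigma> * sqrt (ln (k / \<epsilon>))" using s Lpos by simp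
  then have R'R: "R' > R" using R'def R0 by linarith
  have vp: "(\<forall>c\<in>C. V c \<in> sets borel) \<and> (\<forall>c\<in>C. \<forall>x\<in>V c. \<forall>c'\<in>C. dist x c \<le> dist x c') \<and> (\<Union>c\<in>C. V c) = UNIV"
    using assms(9) unfolding voronoi_partition_def by (elim conjE) (intro conjI)
  have Vm[measurable]: "\<And>c. c \<in> C \<Longrightarrow> V c \<in> sets borel" using conjunct1[OF vp] by blast
  have Vd: "\<And>c x c'. c \<in> C \<Longrightarrow> x \<in> V c \<Longrightarrow> c' \<in> C \<Longrightarrow> dist x c \<le> dist x c'"
    using conjunct1[OF conjunct2[OF vp]] by blast
  have Vcov: "\<exists>c\<in>C. y \<in> V c" for y
  proof -
    have "y \<in> (\<Union>c\<in>C. V c)" using conjunct2[OF conjunct2[OF vp]] by simp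
    then show ?thesis by (rule UN_E) blast
  qed
  define g where "g c \<mu> = indicator (- cball c R') \<mu> * (2 * (norm (\<mu> - c))\<^sup>2 + 2 * R'\<^sup>2)" for c \<mu> :: 'a
  define Zr where "Zr y = (\<integral>\<mu>. gauss_pdf \<sigma> (y - \<mu>) \<partial>Q0)" for y
  define T where "T c y = (\<integral>\<mu>. gauss_pdf \<sigma> (y - \<mu>) * g c \<mu> \<partial>Q0)" for c y
  define H where "H y = (\<Sum>c\<in>C. indicator (V c) y * ennreal (T c y / Zr y))" for y
  define K where "K = (32 * \<sigma>\<^sup>2 + 6 * R'\<^sup>2) * \<epsilon>"
  have g0: "g c \<mu> \<ge> 0" for c \<mu> by (simp add: g_def)
  have cw: "continuous_on UNIV (\<lambda>\<mu>. gauss_pdf \<sigma> (y - \<mu>))" for y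
    using s by (intro continuous_intros) auto
  have intZ: "integrable Q0 (\<lambda>\<mu>. gauss_pdf \<sigma> (y - \<mu>))" for y by (rule integrable_cont[OF cw])
  have intT: "integrable Q0 (\<lambda>\<mu>. gauss_pdf \<sigma> (y - \<mu>) * g c \<mu>)" for c y
    using integrable_ind_cont_real[of "\<lambda>\<mu>. gauss_pdf \<sigma> (y - \<mu>) * (2 * (norm (\<mu> - c))\<^sup>2 + 2 * R'\<^sup>2)" "- cball c R'"] s
    by (simp add: g_def ac_simps continuous_intros)
  have Zpos: "Zr y > 0" for y
  proof -
    have "Zr y \<ge> 0" unfolding Zr_def by (rule Bochner_Integration.integral_nonneg) (simp add: gauss_pdf_nonneg s)
    moreover have "Zr y \<noteq> 0"
    proof
      assume "Zr y = 0"
      then have "AE \<mu> in Q0. gauss_pdf \<sigma> (y - \<mu>) = 0"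
        using integral_nonneg_eq_0_iff_AE[OF intZ[of y]] unfolding Zr_def by (simp add: gauss_pdf_nonneg s)
      then have "emeasure Q0 (space Q0) = 0"
        by (subst (asm) AE_iff_measurable[of "space Q0"]) (auto simp: gauss_pdf_pos[OF s] less_imp_neq[symmetric])
      then show False using prob_space.emeasure_space_1[OF assms(1)] by simp
    qed
    ultimately show ?thesis by simp
  qed
  have Tnn: "T c y \<ge> 0" for c y unfolding T_def
    by (rule Bochner_Integration.integral_nonneg) (simp add: gauss_pdf_nonneg s g0)
  have mZ[measurable]: "Zr \<in> borel_measurable borel" unfolding Zr_def[abs_def]
    by (rule sigma_finite_measure.borel_measurable_lebesgue_integral[OF sfQ]) measurable
  have mg1[measurable]: "g c \<in> borel_measurable borel" for c unfolding g_def by measurable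
  have mg[measurable]: "(\<lambda>(y, \<mu>). g c \<mu>) \<in> borel_measurable (borel \<Otimes>\<^sub>M Q0)" for c
    unfolding g_def by measurable
  have mT[measurable]: "T c \<in> borel_measurable borel" for c unfolding T_def[abs_def]
    by (rule sigma_finite_measure.borel_measurable_lebesgue_integral[OF sfQ]) measurable
  have mH[measurable]: "H \<in> borel_measurable borel" unfolding H_def[abs_def]
  proof (rule borel_measurable_sum)
    fix c assume c: "c \<in> C"
    have [measurable]: "V c \<in> sets borel" using Vm[OF c] .
    have "(\<lambda>y. T c y / Zr y) \<in> borel_measurable borel" using mT mZ by (rule borel_measurable_divide)
    then have [measurable]: "(\<lambda>y. ennreal (T c y / Zr y)) \<in> borel_measurable borel" by measurable
    show "(\<lambda>y. indicator (V c) y * ennreal (T c y / Zr y)) \<in> borel_measurable borel" by measurable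
  qed
  have step1: "(\<integral>\<^sup>+ y. ennreal ((norm (post_mean Q0 \<sigma> y - floc y))\<^sup>2) \<partial>(gauss_conv Q0 \<sigma>))
      \<le> (\<integral>\<^sup>+ y. H y \<partial>(gauss_conv Q0 \<sigma>))"
  proof (rule nn_integral_mono)
    fix y
    obtain c where c: "c \<in> C" "y \<in> V c" using Vcov by blast
    have fl: "floc y = post_mean (cond_measure Q0 (cball c R')) \<sigma> y" using assms(12) c by blast
    have "Zr y * (norm (post_mean Q0 \<sigma> y - floc y))\<^sup>2 \<le> T c y"
      unfolding fl Zr_def T_def g_def
      by (rule post_bound[OF s]) (use R'R R0 assms(11) c in auto)
    then have "(norm (post_mean Q0 \<sigma> y - floc y))\<^sup>2 \<le> T c y / Zr y"
      using Zpos[of y] by (simp add: pos_le_divide_eq mult.commute)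
    then have "ennreal ((norm (post_mean Q0 \<sigma> y - floc y))\<^sup>2) \<le> indicator (V c) y * ennreal (T c y / Zr y)"
      using c by (simp add: ennreal_leI)
    also have "\<dots> \<le> H y" unfolding H_def
      by (rule member_le_sum[OF c(1)]) (simp_all add: finC)
    finally show "ennreal ((norm (post_mean Q0 \<sigma> y - floc y))\<^sup>2) \<le> H y" .
  qed
  have step2: "(\<integral>\<^sup>+y. H y \<partial>gauss_conv Q0 \<sigma>) = (\<integral>\<^sup>+y. H y * (\<integral>\<^sup>+m. ennreal (gauss_pdf \<sigma> (y - m)) \<partial>Q0) \<partial>lborel)"
    by (rule conv_nn[OF assms(1,2) s mH])
  have step3: "H y * (\<integral>\<^sup>+m. ennreal (gauss_pdf \<sigma> (y - m)) \<partial>Q0)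
      = (\<Sum>c\<in>C. indicator (V c) y * (\<integral>\<^sup>+\<mu>. ennreal (gauss_pdf \<sigma> (y - \<mu>) * g c \<mu>) \<partial>Q0))" for y
  proof -
    have z: "(\<integral>\<^sup>+m. ennreal (gauss_pdf \<sigma> (y - m)) \<partial>Q0) = ennreal (Zr y)" unfolding Zr_def
      by (rule nn_integral_eq_integral[OF intZ]) (simp add: gauss_pdf_nonneg s)
    have t: "(\<integral>\<^sup>+\<mu>. ennreal (gauss_pdf \<sigma> (y - \<mu>) * g c \<mu>) \<partial>Q0) = ennreal (T c y)" for c
      unfolding T_def by (rule nn_integral_eq_integral[OF intT]) (simp add: gauss_pdf_nonneg s g0)
    have tz: "ennreal (T c y / Zr y) * ennreal (Zr y) = ennreal (T c y)" for c
    proof -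
      have "ennreal (T c y / Zr y) * ennreal (Zr y) = ennreal (T c y / Zr y * Zr y)"
        by (rule ennreal_mult'[symmetric]) (simp add: Tnn Zpos less_imp_le)
      then show ?thesis using Zpos[of y] by simp
    qed
    show ?thesis unfolding H_def z t sum_distrib_right mult.assoc tz ..
  qed
  have step4: "(\<integral>\<^sup>+y. (\<Sum>c\<in>C. indicator (V c) y * (\<integral>\<^sup>+\<mu>. ennreal (gauss_pdf \<sigma> (y - \<mu>) * g c \<mu>) \<partial>Q0)) \<partial>lborel)
     = (\<Sum>c\<in>C. (\<integral>\<^sup>+y. indicator (V c) y * (\<integral>\<^sup>+\<mu>. ennreal (gauss_pdf \<sigma> (y - \<mu>) * g c \<mu>) \<partial>Q0) \<partial>lborel))"
    by (rule nn_integral_sum) measurable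
  have AEU: "AE \<mu> in Q0. \<mu> \<in> (\<Union>c\<in>C. cball c R)"
    by (rule AE_prob_1) (simp add: measure_def cover)
  have pw: "ennreal (g c \<mu>) * (\<integral>\<^sup>+y. indicator (V c) y * ennreal (gauss_pdf \<sigma> (y - \<mu>)) \<partial>lborel) \<le> ennreal (K / k)"
    if c: "c \<in> C" and \<mu>U: "\<mu> \<in> (\<Union>c\<in>C. cball c R)" for c \<mu>
  proof (cases "\<mu> \<in> cball c R'")
    case True
    then show ?thesis by (simp add: g_def)
  next
    case False
    then have d: "norm (\<mu> - c) > R'" by (simp add: dist_norm norm_minus_commute)
    obtain c' where c': "c' \<in> C" "\<mu> \<in> cball c' R" using \<mu>U by blast
    then have e: "norm (\<mu> - c') \<le> R" by (simp add: dist_norm norm_minus_commute)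
    have gv: "g c \<mu> = 2 * (norm (\<mu> - c))\<^sup>2 + 2 * R'\<^sup>2" using False by (simp add: g_def)
    have vt: "(\<integral>\<^sup>+y. indicator (V c) y * ennreal (gauss_pdf \<sigma> (y - \<mu>)) \<partial>lborel)
         \<le> ennreal (exp (- (norm (\<mu> - c) - R)\<^sup>2 / (8 * \<sigma>\<^sup>2)))"
      by (rule voronoi_tail[OF s _ e _ Vm[OF c]]) (use R0 d R'R Vd[OF c _ c'(1)] in auto)
    have "ennreal (g c \<mu>) * (\<integral>\<^sup>+y. indicator (V c) y * ennreal (gauss_pdf \<sigma> (y - \<mu>)) \<partial>lborel)
        \<le> ennreal (g c \<mu>) * ennreal (exp (- (norm (\<mu> - c) - R)\<^sup>2 / (8 * \<sigma>\<^sup>2)))"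
      by (rule mult_left_mono[OF vt]) simp
    also have "\<dots> = ennreal (g c \<mu> * exp (- (norm (\<mu> - c) - R)\<^sup>2 / (8 * \<sigma>\<^sup>2)))"
      by (rule ennreal_mult'[symmetric]) (simp add: g0)
    also have "\<dots> \<le> ennreal (K / k)" unfolding gv K_def
      by (rule ennreal_leI, rule scalar_bound[OF s _ e0 _ _ R'def d]) (use R0 Lpos k1 in auto)
    finally show ?thesis .
  qed
  have bc: "(\<integral>\<^sup>+y. indicator (V c) y * (\<integral>\<^sup>+\<mu>. ennreal (gauss_pdf \<sigma> (y - \<mu>) * g c \<mu>) \<partial>Q0) \<partial>lborel) \<le> ennreal (K / k)"
    if c: "c \<in> C" for c
  proof -
    have [measurable]: "V c \<in> sets borel" using Vm[OF c] .
    have "(\<integral>\<^sup>+y. indicator (V c) y * (\<integral>\<^sup>+\<mu>. ennreal (gauss_pdf \<sigma> (y - \<mu>) * g c \<mu>) \<partial>Q0) \<partial>lborel)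
       = (\<integral>\<^sup>+y. (\<integral>\<^sup>+\<mu>. indicator (V c) y * ennreal (gauss_pdf \<sigma> (y - \<mu>) * g c \<mu>) \<partial>Q0) \<partial>lborel)"
      by (rule nn_integral_cong, rule nn_integral_cmult[symmetric]) measurable
    also have "\<dots> = (\<integral>\<^sup>+\<mu>. (\<integral>\<^sup>+y. indicator (V c) y * ennreal (gauss_pdf \<sigma> (y - \<mu>) * g c \<mu>) \<partial>lborel) \<partial>Q0)"
      by (rule QL.Fubini') measurable
    also have "\<dots> = (\<integral>\<^sup>+\<mu>. ennreal (g c \<mu>) * (\<integral>\<^sup>+y. indicator (V c) y * ennreal (gauss_pdf \<sigma> (y - \<mu>)) \<partial>lborel) \<partial>Q0)"
    proof (rule nn_integral_cong)
      fix \<mu>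
      have "(\<integral>\<^sup>+y. indicator (V c) y * ennreal (gauss_pdf \<sigma> (y - \<mu>) * g c \<mu>) \<partial>lborel)
          = (\<integral>\<^sup>+y. ennreal (g c \<mu>) * (indicator (V c) y * ennreal (gauss_pdf \<sigma> (y - \<mu>))) \<partial>lborel)"
      proof (rule nn_integral_cong)
        fix y :: 'a
        have "ennreal (gauss_pdf \<sigma> (y - \<mu>) * g c \<mu>) = ennreal (g c \<mu>) * ennreal (gauss_pdf \<sigma> (y - \<mu>))"
          using ennreal_mult'[OF g0, of c \<mu> "gauss_pdf \<sigma> (y - \<mu>)"] by (simp only: mult.commute)
        then show "indicator (V c) y * ennreal (gauss_pdf \<sigma> (y - \<mu>) * g c \<mu>) = ennreal (g c \<mu>) * (indicator (V c) y * ennreal (gauss_pdf \<sigma> (y - \<mu>)))"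
          by (simp only: mult.left_commute)
      qed
      also have "\<dots> = ennreal (g c \<mu>) * (\<integral>\<^sup>+y. indicator (V c) y * ennreal (gauss_pdf \<sigma> (y - \<mu>)) \<partial>lborel)"
        by (rule nn_integral_cmult) measurable
      finally show "(\<integral>\<^sup>+y. indicator (V c) y * ennreal (gauss_pdf \<sigma> (y - \<mu>) * g c \<mu>) \<partial>lborel)
          = ennreal (g c \<mu>) * (\<integral>\<^sup>+y. indicator (V c) y * ennreal (gauss_pdf \<sigma> (y - \<mu>)) \<partial>lborel)" .
    qed
    also have "\<dots> \<le> (\<integral>\<^sup>+\<mu>. ennreal (K / k) \<partial>Q0)"
    proof (rule nn_integral_mono_AE)
      show "AE \<mu> in Q0. ennreal (g c \<mu>) * (\<integral>\<^sup>+y. indicator (V c) y * ennreal (gauss_pdf \<sigma> (y - \<mu>)) \<partial>lborel) \<le> ennreal (K / k)"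
        using AEU
      proof (rule AE_mp, intro AE_I2 impI)
        fix \<mu> assume "\<mu> \<in> (\<Union>c\<in>C. cball c R)"
        then show "ennreal (g c \<mu>) * (\<integral>\<^sup>+y. indicator (V c) y * ennreal (gauss_pdf \<sigma> (y - \<mu>)) \<partial>lborel) \<le> ennreal (K / k)"
          by (rule pw[OF c])
      qed
    qed
    also have "\<dots> = ennreal (K / k)" by (simp add: prob_space.emeasure_space_1[OF assms(1)])
    finally show ?thesis .
  qed
  have "(\<integral>\<^sup>+ y. ennreal ((norm (post_mean Q0 \<sigma> y - floc y))\<^sup>2) \<partial>(gauss_conv Q0 \<sigma>))
      \<le> (\<Sum>c\<in>C. (\<integral>\<^sup>+y. indicator (V c) y * (\<integral>\<^sup>+\<mu>. ennreal (gauss_pdf \<sigma> (y - \<mu>) * g c \<mu>) \<partial>Q0) \<partial>lborel))"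
    using step1 unfolding step2 step3 step4 .
  also have "\<dots> \<le> (\<Sum>c\<in>C. ennreal (K / k))" by (rule sum_mono) (rule bc)
  also have "\<dots> = ennreal (\<Sum>c\<in>C. K / k)" by (rule sum_ennreal) (use k1 s e0 in \<open>simp add: K_def\<close>)
  also have "(\<Sum>c\<in>C. K / k) = K" using k1 by (simp add: k_def)
  finally show ?thesis unfolding K_def .
qed


end
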